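(* Let $\mu>\operatorname{cf}(\mu)=\kappa$ be a singular cardinal and let $\lambda$ be a regular cardinal with $\mu<\lambda\le 2^\mu$. Let $\mathcal{S}$ be a nice system for $\mu$, consisting of $(\mu_i:i<\kappa)$, $(\lambda_i:i<\kappa)$, $(\mathscr{D}_i:i<\kappa)$, $(W_i:i<\kappa)$, $(g_i:i<\kappa)$. Assume: (1) $\mathscr{D}$ is a uniform ultrafilter over $\kappa$ which is generated by at most $\lambda$ many sets; (2) $\bar f=(f_\alpha:\alpha<\lambda)$ is a sullam in $(\prod_{i<\kappa}W_i,\mathscr{D})$; (3) $\operatorname{cf}(\prod_{i<\kappa}\mathscr{D}_i,\supseteq)=\lambda$. Then there exists a uniform ultrafilter $\mathscr{U}$ over $\mu$ with $\operatorname{Ch}(\mathscr{U})\le\lambda$.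
   Context: A filter over a cardinal $\theta$ is uniform if all its members have cardinality $\theta$; all filters $\mathscr{D}$ over a regular $\theta$ considered here are uniform and contain $\{\theta-u:u\in[\theta]^{<\theta}\}$. For $A,B\subseteq\theta$, $A\subseteq^* B$ means $|A-B|<\theta$. A base for a uniform filter $\mathcal{F}$ over $\theta$ is a subfamily $\mathcal{A}\subseteq\mathcal{F}$ such that every $B\in\mathcal{F}$ has some $A\in\mathcal{A}$ with $A\subseteq^*B$; $\operatorname{Ch}(\mathcal{F})$ is the minimal size of a base. For a filter $\mathscr{D}$ over $\theta$: $I(\mathscr{D})=\{A\subseteq\theta:\theta-A\in\mathscr{D}\}$, $\mathscr{D}^+=\mathcal{P}(\theta)-I(\mathscr{D})$, and $A\subseteq_{\mathscr{D}}B$ iff $A-B\in I(\mathscr{D})$. A quasi order $(W,\le_W)$ is a reflexive transitive relation; $V\subseteq W$ is dense if for every $x\in W$ there is $y\in V$ with $x\le_W y$. For a quasi order $W$ and a filter $\mathscr{D}$ over $\theta$, a function $g:W\to\mathscr{D}^+$ is $\subseteq_{\mathscr{D}}$-decreasing if $s\le_W t$ implies $g(t)\subseteq_{\mathscr{D}}g(s)$, and $g$ has the decidability property if for every $s\in W$ and every $A\subseteq\theta$ there is $t\in W$ with $s\le_W t$ and ($g(t)\subseteq_{\mathscr{D}}A$ or $g(t)\subseteq_{\mathscr{D}}\theta-A$). Nice system for singular $\mu$ with $\operatorname{cf}(\mu)=\kappa$: an increasing sequence of cardinals $(\mu_i:i<\kappa)$ with $\mu=\bigcup_i\mu_i$;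 an increasing sequence of regular cardinals $(\lambda_i:i<\kappa)$ with $\mu_i\le\lambda_i<\mu_{i+1}$; filters $\mathscr{D}_i$ over $\lambda_i$; quasi orders $W_i$; and functions $g_i:W_i\to\mathscr{D}_i^+$ each $\subseteq_{\mathscr{D}_i}$-decreasing with the decidability property. Sullam: for a regular $\kappa$, an ultrafilter (or filter) $\mathscr{D}$ over $\kappa$ containing all co-bounded sets, and quasi orders $W_i$, a sequence $(f_\alpha:\alpha<\lambda)$ with $f_\alpha\in\prod_{i<\kappa}W_i$ is a sullam in $(\prod_{i<\kappa}W_i,\mathscr{D})$ if (a) for $\alpha<\beta$, $\{i:f_\alpha(i)\le_{W_i}f_\beta(i)\}\in\mathscr{D}$, and (b) whenever $V_i\subseteq W_i$ is dense for each $i$, there is $\alpha<\lambda$ with $\{i:f_\alpha(i)\in V_i\}\in\mathscr{D}$. $\operatorname{cf}(\prod_{i<\kappa}\mathscr{D}_i,\supseteq)$ is the minimal size of a family $\mathcal{F}\subseteq\prod_{i<\kappa}\mathscr{D}_i$ such that for every $\langle B_i:i<\kappa\rangle\in\prod_i\mathscr{D}_i$ there is $\langle A_i:i<\kappa\rangle\in\mathcal{F}$ with $\{i:A_i\subseteq B_i\}\in\mathscr{D}$. *)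

theory Defs
  imports Main "HOL-Library.FuncSet"
begin

abbreviation cle :: "'a rel \<Rightarrow> 'b rel \<Rightarrow> bool" where "cle r s \<equiv> (r, s) \<in> ordLeq"
abbreviation clt :: "'a rel \<Rightarrow> 'b rel \<Rightarrow> bool" where "clt r s \<equiv> (r, s) \<in> ordLess"
abbreviation ceq :: "'a rel \<Rightarrow> 'b rel \<Rightarrow> bool" where "ceq r s \<equiv> (r, s) \<in> ordIso"

definition regular_cardinal :: "'a rel \<Rightarrow> bool" where
  "regular_cardinal r \<longleftrightarrow> Cinfinite r \<and> regularCard r"

definition is_cf :: "'a rel \<Rightarrow> 'b rel \<Rightarrow> bool" where
  "is_cf r k \<longleftrightarrow> Card_order k \<and>
     (\<exists>A. A \<subseteq> Field r \<and> cofinal A r \<and> ceq (card_of A) k) \<and>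
     (\<forall>A. A \<subseteq> Field r \<and> cofinal A r \<longrightarrow> cle k (card_of A))"

definition filter_on :: "'a set \<Rightarrow> 'a set set \<Rightarrow> bool" where
  "filter_on X F \<longleftrightarrow> F \<subseteq> Pow X \<and> X \<in> F \<and> {} \<notin> F \<and>
     (\<forall>A\<in>F. \<forall>B\<in>F. A \<inter> B \<in> F) \<and>
     (\<forall>A\<in>F. \<forall>B. A \<subseteq> B \<and> B \<subseteq> X \<longrightarrow> B \<in> F)"

(* uniform filter over X: all members have cardinality |X|, and it contains
   every co-small set X - u with |u| < |X| (standing convention of the paper) *)
definition uniform_filter :: "'a set \<Rightarrow> 'a set set \<Rightarrow> bool" where
  "uniform_filter X F \<longleftrightarrow> filter_on X F \<and> (\<forall>A\<in>F. ceq (card_of A) (card_of X)) \<and>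
     (\<forall>u. u \<subseteq> X \<and> clt (card_of u) (card_of X) \<longrightarrow> X - u \<in> F)"

definition ultrafilter_on :: "'a set \<Rightarrow> 'a set set \<Rightarrow> bool" where
  "ultrafilter_on X F \<longleftrightarrow> filter_on X F \<and> (\<forall>A. A \<subseteq> X \<longrightarrow> A \<in> F \<or> X - A \<in> F)"

definition generates :: "'a set \<Rightarrow> 'a set set \<Rightarrow> 'a set set \<Rightarrow> bool" where
  "generates X G F \<longleftrightarrow> G \<subseteq> F \<and>
     (\<forall>A\<in>F. \<exists>H. finite H \<and> H \<subseteq> G \<and> X \<inter> \<Inter>H \<subseteq> A)"

definition subset_star :: "'a set \<Rightarrow> 'a set \<Rightarrow> 'a set \<Rightarrow> bool" where
  "subset_star X A B \<longleftrightarrow> clt (card_of (A - B)) (card_of X)"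

definition is_base :: "'a set \<Rightarrow> 'a set set \<Rightarrow> 'a set set \<Rightarrow> bool" where
  "is_base X F B \<longleftrightarrow> B \<subseteq> F \<and> (\<forall>C\<in>F. \<exists>A\<in>B. subset_star X A C)"

definition Ch_le :: "'a set \<Rightarrow> 'a set set \<Rightarrow> 'b rel \<Rightarrow> bool" where
  "Ch_le X F lam \<longleftrightarrow> (\<exists>B. is_base X F B \<and> cle (card_of B) lam)"

definition ideal_of :: "'a set \<Rightarrow> 'a set set \<Rightarrow> 'a set set" where
  "ideal_of X F = {A. A \<subseteq> X \<and> X - A \<in> F}"

definition positive_sets :: "'a set \<Rightarrow> 'a set set \<Rightarrow> 'a set set" where
  "positive_sets X F = Pow X - ideal_of X F"

definition subset_D :: "'a set \<Rightarrow> 'a set set \<Rightarrow> 'a set \<Rightarrow> 'a set \<Rightarrow> bool" where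
  "subset_D X F A B \<longleftrightarrow> A - B \<in> ideal_of X F"

definition quasi_order :: "'w set \<Rightarrow> 'w rel \<Rightarrow> bool" where
  "quasi_order W le \<longleftrightarrow> le \<subseteq> W \<times> W \<and> refl_on W le \<and> trans le"

definition dense_in :: "'w set \<Rightarrow> 'w rel \<Rightarrow> 'w set \<Rightarrow> bool" where
  "dense_in W le V \<longleftrightarrow> V \<subseteq> W \<and> (\<forall>x\<in>W. \<exists>y\<in>V. (x, y) \<in> le)"

definition decreasing_D :: "'a set \<Rightarrow> 'a set set \<Rightarrow> 'w set \<Rightarrow> 'w rel \<Rightarrow> ('w \<Rightarrow> 'a set) \<Rightarrow> bool" where
  "decreasing_D X F W le g \<longleftrightarrow>
     (\<forall>s\<in>W. \<forall>t\<in>W. (s, t) \<in> le \<longrightarrow> subset_D X F (g t) (g s))"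

definition decidability :: "'a set \<Rightarrow> 'a set set \<Rightarrow> 'w set \<Rightarrow> 'w rel \<Rightarrow> ('w \<Rightarrow> 'a set) \<Rightarrow> bool" where
  "decidability X F W le g \<longleftrightarrow>
     (\<forall>s\<in>W. \<forall>A. A \<subseteq> X \<longrightarrow> (\<exists>t\<in>W. (s, t) \<in> le \<and>
        (subset_D X F (g t) A \<or> subset_D X F (g t) (X - A))))"

(* Nice system for the singular cardinal |M| with cofinality kr (index set Field kr).
   mu i, lam i are sets whose cardinalities are mu_i, lambda_i; D i is a filter over lam i. *)
definition nice_system ::
  "'a set \<Rightarrow> 'i rel \<Rightarrow> ('i \<Rightarrow> 'a set) \<Rightarrow> ('i \<Rightarrow> 'a set) \<Rightarrow> ('i \<Rightarrow> 'a set set)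
    \<Rightarrow> ('i \<Rightarrow> 'w set) \<Rightarrow> ('i \<Rightarrow> 'w rel) \<Rightarrow> ('i \<Rightarrow> 'w \<Rightarrow> 'a set) \<Rightarrow> bool" where
  "nice_system M kr mu lam D W le g \<longleftrightarrow>
     (\<forall>i\<in>Field kr. \<forall>j\<in>Field kr. i \<noteq> j \<and> (i, j) \<in> kr \<longrightarrow>
        clt (card_of (mu i)) (card_of (mu j)) \<and> clt (card_of (lam i)) (card_of (lam j))) \<and>
     (\<forall>i\<in>Field kr. cle (card_of (mu i)) (card_of M)) \<and>
     (\<forall>B::'a set. clt (card_of B) (card_of M) \<longrightarrow> (\<exists>i\<in>Field kr. cle (card_of B) (card_of (mu i)))) \<and>
     (\<forall>i\<in>Field kr. regular_cardinal (card_of (lam i)) \<and> cle (card_of (mu i)) (card_of (lam i))) \<and>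
     (\<forall>i\<in>Field kr. \<forall>j\<in>Field kr.
        (i \<noteq> j \<and> (i, j) \<in> kr \<and> (\<forall>j'\<in>Field kr. i \<noteq> j' \<and> (i, j') \<in> kr \<longrightarrow> (j, j') \<in> kr))
        \<longrightarrow> clt (card_of (lam i)) (card_of (mu j))) \<and>
     (\<forall>i\<in>Field kr. uniform_filter (lam i) (D i) \<and> quasi_order (W i) (le i) \<and>
        g i \<in> W i \<rightarrow> positive_sets (lam i) (D i) \<and>
        decreasing_D (lam i) (D i) (W i) (le i) (g i) \<and>
        decidability (lam i) (D i) (W i) (le i) (g i))"

definition sullam ::
  "'i set \<Rightarrow> 'i set set \<Rightarrow> ('i \<Rightarrow> 'w set) \<Rightarrow> ('i \<Rightarrow> 'w rel) \<Rightarrow> 'l rel \<Rightarrow> ('l \<Rightarrow> 'i \<Rightarrow> 'w) \<Rightarrow> bool" where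
  "sullam K E W le lr f \<longleftrightarrow>
     (\<forall>\<alpha>\<in>Field lr. f \<alpha> \<in> Pi K W) \<and>
     (\<forall>\<alpha>\<in>Field lr. \<forall>\<beta>\<in>Field lr. \<alpha> \<noteq> \<beta> \<and> (\<alpha>, \<beta>) \<in> lr \<longrightarrow>
        {i\<in>K. (f \<alpha> i, f \<beta> i) \<in> le i} \<in> E) \<and>
     (\<forall>V. (\<forall>i\<in>K. dense_in (W i) (le i) (V i)) \<longrightarrow>
        (\<exists>\<alpha>\<in>Field lr. {i\<in>K. f \<alpha> i \<in> V i} \<in> E))"

definition prod_cofinal :: "'i set \<Rightarrow> 'i set set \<Rightarrow> ('i \<Rightarrow> 'a set set) \<Rightarrow> ('i \<Rightarrow> 'a set) set \<Rightarrow> bool" where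
  "prod_cofinal K E D Fam \<longleftrightarrow> Fam \<subseteq> Pi\<^sub>E K D \<and>
     (\<forall>B\<in>Pi\<^sub>E K D. \<exists>A\<in>Fam. {i\<in>K. A i \<subseteq> B i} \<in> E)"

definition cf_prod_eq :: "'i set \<Rightarrow> 'i set set \<Rightarrow> ('i \<Rightarrow> 'a set set) \<Rightarrow> 'l rel \<Rightarrow> bool" where
  "cf_prod_eq K E D lam \<longleftrightarrow>
     (\<exists>Fam. prod_cofinal K E D Fam \<and> ceq (card_of Fam) lam) \<and>
     (\<forall>Fam. prod_cofinal K E D Fam \<longrightarrow> cle lam (card_of Fam))"

end

theory Submission imports Defs begin
unbundle cardinal_syntax


lemma lists_len_card:
  assumes "infinite A"
  shows "|{xs. set xs \<subseteq> A \<and> length xs = n}| \<le>o |A|"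
proof (induction n)
  case 0
  have e: "{xs. set xs \<subseteq> A \<and> length xs = 0} = {[]}" by auto
  have "A \<noteq> {}" using assms by auto
  then show ?case unfolding e by (rule card_of_singl_ordLeq)
next
  case (Suc n)
  let ?L = "{xs. set xs \<subseteq> A \<and> length xs = n}"
  have e: "{xs. set xs \<subseteq> A \<and> length xs = Suc n} = (\<lambda>(x,xs). x#xs) ` (A \<times> ?L)"
    by (auto simp: image_def length_Suc_conv)
  have t: "|A \<times> ?L| \<le>o |A|"
    by (rule card_of_Times_ordLeq_infinite_Field[of "|A|" A ?L, unfolded Field_card_of,
       OF assms ordIso_imp_ordLeq[OF card_of_refl] Suc card_of_card_order_on])
  show ?case unfolding e by (rule ordLeq_transitive[OF card_of_image t])
qed

lemma Fpow_card:
  assumes "infinite A"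
  shows "|Fpow A| \<le>o |A|"
proof -
  have s: "Fpow A \<subseteq> set ` (\<Union>n. {xs. set xs \<subseteq> A \<and> length xs = n})"
  proof
    fix X assume "X \<in> Fpow A"
    then have "finite X" "X \<subseteq> A" by (auto simp: Fpow_def)
    then obtain xs where "set xs = X" using finite_list by blast
    then show "X \<in> set ` (\<Union>n. {xs. set xs \<subseteq> A \<and> length xs = n})"
      using \<open>X \<subseteq> A\<close> by auto
  qed
  have u: "|\<Union>n. {xs. set xs \<subseteq> A \<and> length xs = n}| \<le>o |A|"
  proof (rule card_of_UNION_ordLeq_infinite[OF assms])
    show "|UNIV :: nat set| \<le>o |A|" using assms by (simp add: infinite_iff_card_of_nat)
    show "\<forall>n\<in>UNIV. |{xs. set xs \<subseteq> A \<and> length xs = n}| \<le>o |A|"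
      using lists_len_card[OF assms] by blast
  qed
  show ?thesis
    by (rule ordLeq_transitive[OF card_of_mono1[OF s] ordLeq_transitive[OF card_of_image u]])
qed

lemma filter_Int: "filter_on X F \<Longrightarrow> A \<in> F \<Longrightarrow> B \<in> F \<Longrightarrow> A \<inter> B \<in> F"
  unfolding filter_on_def by blast
lemma filter_up: "filter_on X F \<Longrightarrow> A \<in> F \<Longrightarrow> A \<subseteq> B \<Longrightarrow> B \<subseteq> X \<Longrightarrow> B \<in> F"
  unfolding filter_on_def by blast
lemma filter_top: "filter_on X F \<Longrightarrow> X \<in> F"
  unfolding filter_on_def by blast
lemma filter_sub: "filter_on X F \<Longrightarrow> A \<in> F \<Longrightarrow> A \<subseteq> X"
  unfolding filter_on_def by blast
lemma filter_ne: "filter_on X F \<Longrightarrow> A \<in> F \<Longrightarrow> A \<noteq> {}"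
  unfolding filter_on_def by blast

lemma sD_iff: "subset_D X F A B \<longleftrightarrow> A - B \<subseteq> X \<and> X - (A - B) \<in> F"
  unfolding subset_D_def ideal_of_def by simp

lemma E_fin_Int:
  assumes "filter_on K E" "finite H" "H \<subseteq> E"
  shows "K \<inter> \<Inter>H \<in> E"
  using assms(2,3)
proof (induction H rule: finite_induct)
  case empty then show ?case using filter_top[OF assms(1)] by simp
next
  case (insert x H)
  have "x \<in> E" using insert by simp
  then have "x \<subseteq> K" using filter_sub[OF assms(1)] by simp
  then have "K \<inter> \<Inter>(insert x H) = x \<inter> (K \<inter> \<Inter>H)" by auto
  then show ?case using insert filter_Int[OF assms(1) \<open>x \<in> E\<close>] by simp
qed

lemma sD_trans:
  assumes "filter_on X F" "A \<subseteq> X" "subset_D X F A B" "subset_D X F B C"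
  shows "subset_D X F A C"
proof -
  have "(X - (A - B)) \<inter> (X - (B - C)) \<in> F"
    using assms(3,4) filter_Int[OF assms(1)] unfolding sD_iff by blast
  moreover have "(X - (A - B)) \<inter> (X - (B - C)) \<subseteq> X - (A - C)" by blast
  ultimately have "X - (A - C) \<in> F" using filter_up[OF assms(1)] by blast
  then show ?thesis using assms(2) unfolding sD_iff by blast
qed

lemma sD_Int:
  assumes "filter_on X F" "subset_D X F A B" "subset_D X F A C"
  shows "subset_D X F A (B \<inter> C)"
proof -
  have "(X - (A - B)) \<inter> (X - (A - C)) \<in> F"
    using assms(2,3) filter_Int[OF assms(1)] unfolding sD_iff by blast
  moreover have "(X - (A - B)) \<inter> (X - (A - C)) = X - (A - (B \<inter> C))" by blast
  moreover have "A - (B \<inter> C) \<subseteq> X" using assms(2,3) unfolding sD_iff by blast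
  ultimately show ?thesis unfolding sD_iff by simp
qed

lemma sD_mono:
  assumes "filter_on X F" "subset_D X F A B" "B \<subseteq> C"
  shows "subset_D X F A C"
proof -
  have "X - (A - B) \<in> F" "A - B \<subseteq> X" using assms(2) unfolding sD_iff by blast+
  moreover have "X - (A - B) \<subseteq> X - (A - C)" using assms(3) by blast
  ultimately have "X - (A - C) \<in> F" using filter_up[OF assms(1)] by blast
  moreover have "A - C \<subseteq> X" using \<open>A - B \<subseteq> X\<close> assms(3) by blast
  ultimately show ?thesis unfolding sD_iff by simp
qed

lemma sD_pos:
  assumes "filter_on X F" "A \<in> positive_sets X F" "subset_D X F A B" "X - B \<in> F"
  shows False
proof -
  have "(X - (A - B)) \<inter> (X - B) \<in> F"
    using assms(3,4) filter_Int[OF assms(1)] unfolding sD_iff by blast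
  moreover have "(X - (A - B)) \<inter> (X - B) \<subseteq> X - A" by blast
  ultimately have "X - A \<in> F" using filter_up[OF assms(1)] by blast
  then show False using assms(2) unfolding positive_sets_def ideal_of_def by blast
qed

lemma sD_top:
  assumes "filter_on X F" "A \<subseteq> X"
  shows "subset_D X F A X"
proof -
  have e1: "A - X = {}" using assms(2) by blast
  show ?thesis unfolding sD_iff e1 by (simp add: filter_top[OF assms(1)])
qed

theorem theorem2p4:
  fixes M :: "'a set" and kr :: "'i rel" and lr :: "'l rel"
    and mu lam :: "'i \<Rightarrow> 'a set" and D :: "'i \<Rightarrow> 'a set set"
    and W :: "'i \<Rightarrow> 'w set" and le :: "'i \<Rightarrow> 'w rel" and g :: "'i \<Rightarrow> 'w \<Rightarrow> 'a set"
    and E :: "'i set set" and f :: "'l \<Rightarrow> 'i \<Rightarrow> 'w"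
  assumes kappa: "regular_cardinal kr"
    and cf_mu: "is_cf (card_of M) kr"
    and singular: "clt kr (card_of M)"
    and lambda_reg: "regular_cardinal lr"
    and mu_lt_lambda: "clt (card_of M) lr"
    and lambda_le: "cle lr (card_of (Pow M))"
    and nice: "nice_system M kr mu lam D W le g"
    and E_ultra: "ultrafilter_on (Field kr) E \<and> uniform_filter (Field kr) E"
    and E_gen: "\<exists>G. generates (Field kr) G E \<and> cle (card_of G) lr"
    and sul: "sullam (Field kr) E W le lr f"
    and cfp: "cf_prod_eq (Field kr) E D lr"
  shows "\<exists>U. ultrafilter_on M U \<and> uniform_filter M U \<and> Ch_le M U lr"
proof -
  define K where "K = Field kr"
  have krC: "Card_order kr" and Kinf: "infinite K"
    using kappa unfolding regular_cardinal_def cinfinite_def K_def by auto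
  have lrC: "Card_order lr" and Linf: "infinite (Field lr)"
    using lambda_reg unfolding regular_cardinal_def cinfinite_def by auto
  have krW: "wo_rel kr" using krC unfolding card_order_on_def wo_rel_def by simp
  have lrW: "wo_rel lr" using lrC unfolding card_order_on_def wo_rel_def by simp
  have Ktot: "\<And>a b. a \<in> K \<Longrightarrow> b \<in> K \<Longrightarrow> (a,b) \<in> kr \<or> (b,a) \<in> kr"
    using wo_rel.TOTALS[OF krW] unfolding K_def by blast
  have Ltot: "\<And>a b. a \<in> Field lr \<Longrightarrow> b \<in> Field lr \<Longrightarrow> (a,b) \<in> lr \<or> (b,a) \<in> lr"
    using wo_rel.TOTALS[OF lrW] by blast
  note nice' = nice[unfolded nice_system_def, folded K_def]
  have N1: "\<And>i j. i \<in> K \<Longrightarrow> j \<in> K \<Longrightarrow> i \<noteq> j \<Longrightarrow> (i,j) \<in> kr \<Longrightarrow> |mu i| <o |mu j|"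
    using nice' by blast
  have N2: "\<And>i. i \<in> K \<Longrightarrow> |mu i| \<le>o |M|" using nice' by blast
  have N3: "\<And>B::'a set. |B| <o |M| \<Longrightarrow> \<exists>i\<in>K. |B| \<le>o |mu i|" using nice' by blast
  have N4: "\<And>i. i \<in> K \<Longrightarrow> |mu i| \<le>o |lam i|" using nice' by blast
  have N5: "\<And>i j. i \<in> K \<Longrightarrow> j \<in> K \<Longrightarrow> i \<noteq> j \<Longrightarrow> (i,j) \<in> kr \<Longrightarrow>
      (\<forall>j'\<in>K. i \<noteq> j' \<and> (i,j') \<in> kr \<longrightarrow> (j,j') \<in> kr) \<Longrightarrow> |lam i| <o |mu j|"
    using nice' by blast
  have N6: "\<And>i. i \<in> K \<Longrightarrow> uniform_filter (lam i) (D i) \<and> quasi_order (W i) (le i) \<and>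
        g i \<in> W i \<rightarrow> positive_sets (lam i) (D i) \<and>
        decreasing_D (lam i) (D i) (W i) (le i) (g i) \<and>
        decidability (lam i) (D i) (W i) (le i) (g i)" using nice' by blast
  have Dfil: "\<And>i. i \<in> K \<Longrightarrow> filter_on (lam i) (D i)"
    using N6 unfolding uniform_filter_def by blast
  have Dunif: "\<And>i u. i \<in> K \<Longrightarrow> u \<subseteq> lam i \<Longrightarrow> |u| <o |lam i| \<Longrightarrow> lam i - u \<in> D i"
    using N6 unfolding uniform_filter_def by blast
  have gpos: "\<And>i t. i \<in> K \<Longrightarrow> t \<in> W i \<Longrightarrow> g i t \<in> positive_sets (lam i) (D i)"
    using N6 by blast
  have gsub: "\<And>i t. i \<in> K \<Longrightarrow> t \<in> W i \<Longrightarrow> g i t \<subseteq> lam i"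
    using gpos unfolding positive_sets_def by blast
  have gdec: "\<And>i s t. i \<in> K \<Longrightarrow> s \<in> W i \<Longrightarrow> t \<in> W i \<Longrightarrow> (s,t) \<in> le i \<Longrightarrow>
      subset_D (lam i) (D i) (g i t) (g i s)"
    using N6 unfolding decreasing_D_def by blast
  have gdecid: "\<And>i s A. i \<in> K \<Longrightarrow> s \<in> W i \<Longrightarrow> A \<subseteq> lam i \<Longrightarrow> \<exists>t\<in>W i. (s,t) \<in> le i \<and>
      (subset_D (lam i) (D i) (g i t) A \<or> subset_D (lam i) (D i) (g i t) (lam i - A))"
    using N6 unfolding decidability_def by blast
  have Efil: "filter_on K E" using E_ultra unfolding K_def ultrafilter_on_def by blast
  have Eultra: "\<And>A. A \<subseteq> K \<Longrightarrow> A \<in> E \<or> K - A \<in> E"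
    using E_ultra unfolding K_def ultrafilter_on_def by blast
  have Eunif: "\<And>u. u \<subseteq> K \<Longrightarrow> |u| <o |K| \<Longrightarrow> K - u \<in> E"
    using E_ultra unfolding K_def uniform_filter_def by blast
  have fW: "\<And>\<alpha> i. \<alpha> \<in> Field lr \<Longrightarrow> i \<in> K \<Longrightarrow> f \<alpha> i \<in> W i"
    using sul unfolding sullam_def K_def by blast
  have fmon: "\<And>\<alpha> \<beta>. \<alpha> \<in> Field lr \<Longrightarrow> \<beta> \<in> Field lr \<Longrightarrow> \<alpha> \<noteq> \<beta> \<Longrightarrow> (\<alpha>,\<beta>) \<in> lr \<Longrightarrow>
      {i\<in>K. (f \<alpha> i, f \<beta> i) \<in> le i} \<in> E"
    using sul unfolding sullam_def K_def by blast
  have fdense: "\<And>V. (\<forall>i\<in>K. dense_in (W i) (le i) (V i)) \<Longrightarrow> \<exists>\<alpha>\<in>Field lr. {i\<in>K. f \<alpha> i \<in> V i} \<in> E"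
    using sul unfolding sullam_def K_def by blast
  have KM: "|K| <o |M|"
    using ordIso_ordLess_trans[OF card_of_Field_ordIso[OF krC] singular] unfolding K_def .
  have Minf: "infinite M" using card_of_ordLeq_infinite[OF ordLess_imp_ordLeq[OF KM] Kinf] .
  have "\<forall>i\<in>K. \<exists>h. inj_on h (lam i) \<and> h ` lam i \<subseteq> M"
  proof
    fix i assume i: "i \<in> K"
    define B where "B = {j \<in> K. i \<noteq> j \<and> (i,j) \<in> kr}"
    have Bne: "B \<noteq> {}"
      using infinite_Card_order_limit[OF krC Kinf[unfolded K_def] i[unfolded K_def]]
      unfolding B_def K_def by blast
    have BK: "B \<subseteq> Field kr" unfolding B_def K_def by blast
    define j where "j = wo_rel.minim kr B"
    have jB: "j \<in> B" unfolding j_def by (rule wo_rel.minim_in[OF krW BK Bne])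
    have jl: "\<forall>j'\<in>K. i \<noteq> j' \<and> (i,j') \<in> kr \<longrightarrow> (j,j') \<in> kr"
      using wo_rel.minim_least[OF krW BK] unfolding j_def B_def by blast
    have jK: "j \<in> K" "i \<noteq> j" "(i,j) \<in> kr" using jB unfolding B_def by blast+
    have "|lam i| <o |mu j|" by (rule N5[OF i jK jl])
    then have "|lam i| \<le>o |M|" by (rule ordLeq_transitive[OF ordLess_imp_ordLeq N2[OF jK(1)]])
    then show "\<exists>h. inj_on h (lam i) \<and> h ` lam i \<subseteq> M" using card_of_ordLeq by blast
  qed
  then obtain h where h: "\<And>i. i \<in> K \<Longrightarrow> inj_on (h i) (lam i) \<and> h i ` lam i \<subseteq> M" by metis
  define pre where "pre i A = {x \<in> lam i. h i x \<in> A}" for i A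
  define wit where "wit \<alpha> A = {i \<in> K. subset_D (lam i) (D i) (g i (f \<alpha> i)) (pre i A)}" for \<alpha> A
  define U where "U = {A. A \<subseteq> M \<and> (\<exists>\<alpha>\<in>Field lr. wit \<alpha> A \<in> E)}"
  have witK: "\<And>\<alpha> A. wit \<alpha> A \<subseteq> K" unfolding wit_def by blast
  have Upre_sub: "\<And>i A. pre i A \<subseteq> lam i" unfolding pre_def by blast
  have UM: "U \<subseteq> Pow M" unfolding U_def by blast
  have persist: "\<And>\<alpha> \<beta> A. \<alpha> \<in> Field lr \<Longrightarrow> \<beta> \<in> Field lr \<Longrightarrow> (\<alpha>,\<beta>) \<in> lr \<Longrightarrow>
      wit \<alpha> A \<in> E \<Longrightarrow> wit \<beta> A \<in> E"
  proof -
    fix \<alpha> \<beta> A assume a: "\<alpha> \<in> Field lr" and b: "\<beta> \<in> Field lr" and ab: "(\<alpha>,\<beta>) \<in> lr"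
      and w: "wit \<alpha> A \<in> E"
    show "wit \<beta> A \<in> E"
    proof (cases "\<alpha> = \<beta>")
      case True then show ?thesis using w by simp
    next
      case False
      have S: "{i\<in>K. (f \<alpha> i, f \<beta> i) \<in> le i} \<in> E" using fmon[OF a b False ab] .
      have "wit \<alpha> A \<inter> {i\<in>K. (f \<alpha> i, f \<beta> i) \<in> le i} \<subseteq> wit \<beta> A"
      proof
        fix i assume "i \<in> wit \<alpha> A \<inter> {i\<in>K. (f \<alpha> i, f \<beta> i) \<in> le i}"
        then have i: "i \<in> K" and s1: "subset_D (lam i) (D i) (g i (f \<alpha> i)) (pre i A)"
          and le: "(f \<alpha> i, f \<beta> i) \<in> le i"
          unfolding wit_def by blast+
        have "subset_D (lam i) (D i) (g i (f \<beta> i)) (g i (f \<alpha> i))"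
          by (rule gdec[OF i fW[OF a i] fW[OF b i] le])
        then have "subset_D (lam i) (D i) (g i (f \<beta> i)) (pre i A)"
          by (rule sD_trans[OF Dfil[OF i] gsub[OF i fW[OF b i]] _ s1])
        then show "i \<in> wit \<beta> A" unfolding wit_def using i by blast
      qed
      then show ?thesis using filter_up[OF Efil filter_Int[OF Efil w S]] witK by blast
    qed
  qed
  have pre_compl: "\<And>i A. i \<in> K \<Longrightarrow> pre i (M - A) = lam i - pre i A"
    using h unfolding pre_def by blast
  have Uultra: "\<And>A. A \<subseteq> M \<Longrightarrow> A \<in> U \<or> M - A \<in> U"
  proof -
    fix A assume AM: "A \<subseteq> M"
    define V where "V i = {t \<in> W i. subset_D (lam i) (D i) (g i t) (pre i A) \<or>
        subset_D (lam i) (D i) (g i t) (lam i - pre i A)}" for i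
    have "\<forall>i\<in>K. dense_in (W i) (le i) (V i)"
    proof
      fix i assume i: "i \<in> K"
      have "pre i A \<subseteq> lam i" by (rule Upre_sub)
      then show "dense_in (W i) (le i) (V i)" unfolding dense_in_def V_def
        using gdecid[OF i] by blast
    qed
    then obtain \<alpha> where a: "\<alpha> \<in> Field lr" and Q: "{i\<in>K. f \<alpha> i \<in> V i} \<in> E"
      using fdense by blast
    show "A \<in> U \<or> M - A \<in> U"
    proof (cases "wit \<alpha> A \<in> E")
      case True then show ?thesis using AM a unfolding U_def by blast
    next
      case False
      then have "K - wit \<alpha> A \<in> E" using Eultra witK by blast
      then have X: "{i\<in>K. f \<alpha> i \<in> V i} \<inter> (K - wit \<alpha> A) \<in> E" by (rule filter_Int[OF Efil Q])
      have "{i\<in>K. f \<alpha> i \<in> V i} \<inter> (K - wit \<alpha> A) \<subseteq> wit \<alpha> (M - A)"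
      proof
        fix i assume "i \<in> {i\<in>K. f \<alpha> i \<in> V i} \<inter> (K - wit \<alpha> A)"
        then have i: "i \<in> K" and v: "f \<alpha> i \<in> V i" and nw: "i \<notin> wit \<alpha> A" by blast+
        have "\<not> subset_D (lam i) (D i) (g i (f \<alpha> i)) (pre i A)" using nw i unfolding wit_def by blast
        then have "subset_D (lam i) (D i) (g i (f \<alpha> i)) (lam i - pre i A)" using v unfolding V_def by blast
        then show "i \<in> wit \<alpha> (M - A)" using i pre_compl[OF i] unfolding wit_def by simp
      qed
      then have "wit \<alpha> (M - A) \<in> E" using filter_up[OF Efil X] witK by blast
      then show ?thesis using a unfolding U_def by blast
    qed
  qed
  have Lne: "Field lr \<noteq> {}" using Linf by auto
  have MU: "M \<in> U"
  proof -
    obtain \<alpha> where a: "\<alpha> \<in> Field lr" using Lne by blast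
    have "\<forall>i\<in>K. subset_D (lam i) (D i) (g i (f \<alpha> i)) (pre i M)"
    proof
      fix i assume i: "i \<in> K"
      have "pre i M = lam i" using h[OF i] unfolding pre_def by blast
      then show "subset_D (lam i) (D i) (g i (f \<alpha> i)) (pre i M)"
        using sD_top[OF Dfil[OF i] gsub[OF i fW[OF a i]]] by simp
    qed
    then have "wit \<alpha> M = K" unfolding wit_def by blast
    then show ?thesis using a filter_top[OF Efil] unfolding U_def by blast
  qed
  have emptyU: "{} \<notin> U"
  proof
    assume "{} \<in> U"
    then obtain \<alpha> where a: "\<alpha> \<in> Field lr" and w: "wit \<alpha> {} \<in> E" unfolding U_def by blast
    obtain i where "i \<in> wit \<alpha> {}" using filter_ne[OF Efil w] by blast
    then have i: "i \<in> K" and s: "subset_D (lam i) (D i) (g i (f \<alpha> i)) (pre i {})"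
      unfolding wit_def by blast+
    have "pre i {} = {}" unfolding pre_def by blast
    then show False using sD_pos[OF Dfil[OF i] gpos[OF i fW[OF a i]] s] filter_top[OF Dfil[OF i]] by simp
  qed
  have Uint: "\<And>A B. A \<in> U \<Longrightarrow> B \<in> U \<Longrightarrow> A \<inter> B \<in> U"
  proof -
    fix A B assume A: "A \<in> U" and B: "B \<in> U"
    obtain \<alpha> where a: "\<alpha> \<in> Field lr" and wa: "wit \<alpha> A \<in> E" using A unfolding U_def by blast
    obtain \<beta> where b: "\<beta> \<in> Field lr" and wb: "wit \<beta> B \<in> E" using B unfolding U_def by blast
    have both: "\<And>\<gamma>. \<gamma> \<in> Field lr \<Longrightarrow> wit \<gamma> A \<in> E \<Longrightarrow> wit \<gamma> B \<in> E \<Longrightarrow> A \<inter> B \<in> U"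
    proof -
      fix \<gamma> assume c: "\<gamma> \<in> Field lr" and w1: "wit \<gamma> A \<in> E" and w2: "wit \<gamma> B \<in> E"
      have "wit \<gamma> A \<inter> wit \<gamma> B \<subseteq> wit \<gamma> (A \<inter> B)"
      proof
        fix i assume "i \<in> wit \<gamma> A \<inter> wit \<gamma> B"
        then have i: "i \<in> K" and s1: "subset_D (lam i) (D i) (g i (f \<gamma> i)) (pre i A)"
          and s2: "subset_D (lam i) (D i) (g i (f \<gamma> i)) (pre i B)" unfolding wit_def by blast+
        have "pre i (A \<inter> B) = pre i A \<inter> pre i B" unfolding pre_def by blast
        then show "i \<in> wit \<gamma> (A \<inter> B)" using sD_Int[OF Dfil[OF i] s1 s2] i unfolding wit_def by simp
      qed
      then have "wit \<gamma> (A \<inter> B) \<in> E" using filter_up[OF Efil filter_Int[OF Efil w1 w2]] witK by blast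
      then show "A \<inter> B \<in> U" using c A unfolding U_def by blast
    qed
    show "A \<inter> B \<in> U"
    proof (cases "(\<alpha>,\<beta>) \<in> lr")
      case True show ?thesis by (rule both[OF b persist[OF a b True wa] wb])
    next
      case False then have ba: "(\<beta>,\<alpha>) \<in> lr" using Ltot[OF a b] by blast
      show ?thesis by (rule both[OF a wa persist[OF b a ba wb]])
    qed
  qed
  have Uup: "\<And>A B. A \<in> U \<Longrightarrow> A \<subseteq> B \<Longrightarrow> B \<subseteq> M \<Longrightarrow> B \<in> U"
  proof -
    fix A B assume A: "A \<in> U" and AB: "A \<subseteq> B" and BM: "B \<subseteq> M"
    obtain \<alpha> where a: "\<alpha> \<in> Field lr" and wa: "wit \<alpha> A \<in> E" using A unfolding U_def by blast
    have "wit \<alpha> A \<subseteq> wit \<alpha> B"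
    proof
      fix i assume "i \<in> wit \<alpha> A"
      then have i: "i \<in> K" and s: "subset_D (lam i) (D i) (g i (f \<alpha> i)) (pre i A)"
        unfolding wit_def by blast+
      have "pre i A \<subseteq> pre i B" using AB unfolding pre_def by blast
      then show "i \<in> wit \<alpha> B" using sD_mono[OF Dfil[OF i] s] i unfolding wit_def by blast
    qed
    then have "wit \<alpha> B \<in> E" using filter_up[OF Efil wa] witK by blast
    then show "B \<in> U" using a BM unfolding U_def by blast
  qed
  have Ufil: "filter_on M U" unfolding filter_on_def using UM MU emptyU Uint Uup by blast
  have Uult: "ultrafilter_on M U" unfolding ultrafilter_on_def using Ufil Uultra by blast
  have NU: "\<And>u. u \<subseteq> M \<Longrightarrow> |u| <o |M| \<Longrightarrow> u \<notin> U"
  proof -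
    fix u assume uM: "u \<subseteq> M" and us: "|u| <o |M|"
    show "u \<notin> U"
    proof
      assume uU: "u \<in> U"
      obtain j where j: "j \<in> K" and uj: "|u| \<le>o |mu j|" using N3[OF us] by blast
      obtain j' where j': "j' \<in> K" "j \<noteq> j'" "(j,j') \<in> kr"
        using infinite_Card_order_limit[OF krC Kinf[unfolded K_def] j[unfolded K_def]]
        unfolding K_def by blast
      have "under kr j \<subseteq> underS kr j'"
      proof
        fix x assume "x \<in> under kr j"
        then have xj: "(x,j) \<in> kr" unfolding under_def by simp
        then have "(x,j') \<in> kr" using wo_rel.TRANS[OF krW] j'(3) unfolding trans_def by blast
        moreover have "x \<noteq> j'"
        proof
          assume "x = j'"
          then show False using xj j' wo_rel.ANTISYM[OF krW] unfolding antisym_def by blast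
        qed
        ultimately show "x \<in> underS kr j'" unfolding underS_def by simp
      qed
      then have "|under kr j| \<le>o |underS kr j'|" by (rule card_of_mono1)
      moreover have "|underS kr j'| <o |K|"
        using ordLess_ordIso_trans[OF card_of_underS[OF krC j'(1)[unfolded K_def]]
            ordIso_symmetric[OF card_of_Field_ordIso[OF krC]]] unfolding K_def .
      ultimately have "|under kr j| <o |K|" by (rule ordLeq_ordLess_trans)
      moreover have "under kr j \<subseteq> K" using under_Field[of kr j] unfolding K_def .
      ultimately have T: "K - under kr j \<in> E" using Eunif by blast
      obtain \<alpha> where a: "\<alpha> \<in> Field lr" and wa: "wit \<alpha> u \<in> E" using uU unfolding U_def by blast
      obtain i where "i \<in> wit \<alpha> u \<inter> (K - under kr j)"
        using filter_ne[OF Efil filter_Int[OF Efil wa T]] by blast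
      then have i: "i \<in> K" and s: "subset_D (lam i) (D i) (g i (f \<alpha> i)) (pre i u)"
        and nij: "(i,j) \<notin> kr"
        unfolding wit_def under_def by blast+
      have ij: "i \<noteq> j" using nij wo_rel.REFL[OF krW] j unfolding K_def refl_on_def by blast
      moreover have "(j,i) \<in> kr" using Ktot[OF i j] nij by blast
      ultimately have mji: "|mu j| <o |mu i|" using N1[OF j i] by blast
      have pu: "|pre i u| \<le>o |u|"
      proof -
        have "inj_on (h i) (pre i u)" by (rule inj_on_subset[OF conjunct1[OF h[OF i]] Upre_sub])
        moreover have "h i ` pre i u \<subseteq> u" unfolding pre_def by blast
        ultimately show ?thesis using card_of_ordLeq[of "pre i u" u] by blast
      qed
      have "|pre i u| <o |lam i|"
        by (rule ordLeq_ordLess_trans[OF ordLeq_transitive[OF pu uj] ordLess_ordLeq_trans[OF mji N4[OF i]]])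
      then have "lam i - pre i u \<in> D i" using Dunif[OF i Upre_sub] by blast
      then show False using sD_pos[OF Dfil[OF i] gpos[OF i fW[OF a i]] s] by blast
    qed
  qed
  have Uunif: "uniform_filter M U"
    unfolding uniform_filter_def
  proof (intro conjI ballI allI impI)
    show "filter_on M U" by (rule Ufil)
  next
    fix A assume A: "A \<in> U"
    have AM: "A \<subseteq> M" using A UM by blast
    have "\<not> |A| <o |M|" using NU[OF AM] A by blast
    then have "|M| \<le>o |A|" using ordLess_or_ordLeq[OF card_of_Well_order card_of_Well_order] by blast
    then show "|A| =o |M|" using card_of_mono1[OF AM] ordIso_iff_ordLeq by blast
  next
    fix u assume "u \<subseteq> M \<and> |u| <o |M|"
    then show "M - u \<in> U" using NU Uultra by blast
  qed
  obtain G where Ggen: "generates K G E" and Gcard: "|G| \<le>o lr"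
    using E_gen unfolding K_def by blast
  obtain Fam where Fcof: "prod_cofinal K E D Fam" and Fcard: "|Fam| =o lr"
    using cfp unfolding cf_prod_eq_def K_def by blast
  have GE: "G \<subseteq> E" using Ggen unfolding generates_def by blast
  have Ggen2: "\<And>A. A \<in> E \<Longrightarrow> \<exists>H. finite H \<and> H \<subseteq> G \<and> K \<inter> \<Inter>H \<subseteq> A"
    using Ggen unfolding generates_def by blast
  have FamPi: "Fam \<subseteq> Pi\<^sub>E K D" using Fcof unfolding prod_cofinal_def by blast
  have Fcof2: "\<And>B. B \<in> Pi\<^sub>E K D \<Longrightarrow> \<exists>A\<in>Fam. {i\<in>K. A i \<subseteq> B i} \<in> E"
    using Fcof unfolding prod_cofinal_def by blast
  define Z where "Z \<alpha> H A = (\<Union>i\<in>K \<inter> \<Inter>H. h i ` (g i (f \<alpha> i) \<inter> A i))"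
    for \<alpha> H and A :: "'i \<Rightarrow> 'a set"
  define Bs where "Bs = ((\<lambda>(\<alpha>,H,A). Z \<alpha> H A) ` (Field lr \<times> Fpow G \<times> Fam)) \<inter> U"
  have base: "is_base M U Bs"
    unfolding is_base_def
  proof (intro conjI ballI)
    show "Bs \<subseteq> U" unfolding Bs_def by blast
  next
    fix C assume C: "C \<in> U"
    obtain \<alpha> where a: "\<alpha> \<in> Field lr" and wc: "wit \<alpha> C \<in> E" using C unfolding U_def by blast
    define B' where "B' i = (if i \<in> K then (if i \<in> wit \<alpha> C then lam i - (g i (f \<alpha> i) - pre i C)
      else lam i) else undefined)" for i
    have B'Pi: "B' \<in> Pi\<^sub>E K D"
    proof (rule PiE_I)
      fix i assume i: "i \<in> K"
      show "B' i \<in> D i"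
      proof (cases "i \<in> wit \<alpha> C")
        case True
        then have "subset_D (lam i) (D i) (g i (f \<alpha> i)) (pre i C)" unfolding wit_def by blast
        then show ?thesis using True i unfolding B'_def sD_iff by simp
      next
        case False then show ?thesis using i filter_top[OF Dfil[OF i]] unfolding B'_def by simp
      qed
    next
      fix i assume "i \<notin> K" then show "B' i = undefined" unfolding B'_def by simp
    qed
    obtain A where A: "A \<in> Fam" and SA: "{i\<in>K. A i \<subseteq> B' i} \<in> E" using Fcof2[OF B'Pi] by blast
    obtain H where H: "finite H" "H \<subseteq> G" and HY: "K \<inter> \<Inter>H \<subseteq> wit \<alpha> C \<inter> {i\<in>K. A i \<subseteq> B' i}"
      using Ggen2[OF filter_Int[OF Efil wc SA]] by blast
    have YE: "K \<inter> \<Inter>H \<in> E" using E_fin_Int[OF Efil H(1)] H(2) GE by blast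
    have AD: "\<And>i. i \<in> K \<Longrightarrow> A i \<in> D i" using A FamPi by blast
    have ZC: "Z \<alpha> H A \<subseteq> C"
    proof
      fix x assume "x \<in> Z \<alpha> H A"
      then obtain i y where iY: "i \<in> K \<inter> \<Inter>H" and y: "y \<in> g i (f \<alpha> i)" "y \<in> A i" and x: "x = h i y"
        unfolding Z_def by blast
      have "i \<in> wit \<alpha> C" "A i \<subseteq> B' i" "i \<in> K" using HY iY by blast+
      then have "y \<in> lam i - (g i (f \<alpha> i) - pre i C)" using y unfolding B'_def by auto
      then show "x \<in> C" using y x unfolding pre_def by blast
    qed
    have ZM: "Z \<alpha> H A \<subseteq> M" using ZC C UM by blast
    have "K \<inter> \<Inter>H \<subseteq> wit \<alpha> (Z \<alpha> H A)"
    proof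
      fix i assume iY: "i \<in> K \<inter> \<Inter>H"
      then have i: "i \<in> K" by blast
      have sub: "g i (f \<alpha> i) - pre i (Z \<alpha> H A) \<subseteq> lam i - A i"
      proof
        fix y assume y: "y \<in> g i (f \<alpha> i) - pre i (Z \<alpha> H A)"
        have yl: "y \<in> lam i" using y gsub[OF i fW[OF a i]] by blast
        moreover have "y \<notin> A i"
        proof
          assume "y \<in> A i"
          then have "h i y \<in> Z \<alpha> H A" using iY y unfolding Z_def by blast
          then show False using y yl unfolding pre_def by blast
        qed
        ultimately show "y \<in> lam i - A i" by blast
      qed
      have "A i \<subseteq> lam i" using filter_sub[OF Dfil[OF i] AD[OF i]] .
      then have "A i \<subseteq> lam i - (g i (f \<alpha> i) - pre i (Z \<alpha> H A))" using sub by blast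
      then have "lam i - (g i (f \<alpha> i) - pre i (Z \<alpha> H A)) \<in> D i"
        using filter_up[OF Dfil[OF i] AD[OF i]] by blast
      moreover have "g i (f \<alpha> i) - pre i (Z \<alpha> H A) \<subseteq> lam i" using sub by blast
      ultimately show "i \<in> wit \<alpha> (Z \<alpha> H A)" unfolding wit_def sD_iff using i by blast
    qed
    then have "wit \<alpha> (Z \<alpha> H A) \<in> E" using filter_up[OF Efil YE] witK by blast
    then have ZU: "Z \<alpha> H A \<in> U" using a ZM unfolding U_def by blast
    have "(\<alpha>,H,A) \<in> Field lr \<times> Fpow G \<times> Fam" using a H A by (simp add: Fpow_def)
    then have "Z \<alpha> H A \<in> (\<lambda>(\<alpha>,H,A). Z \<alpha> H A) ` (Field lr \<times> Fpow G \<times> Fam)"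
      by (rule rev_image_eqI) simp
    then have ZB: "Z \<alpha> H A \<in> Bs" using ZU unfolding Bs_def by blast
    have eZ: "Z \<alpha> H A - C = {}" using ZC by blast
    have emM: "|{}::'a set| <o |M|"
    proof -
      have "|{}::'a set| <o |M| \<or> |M| \<le>o |{}::'a set|"
        by (rule ordLess_or_ordLeq[OF card_of_Well_order card_of_Well_order])
      moreover have "M \<noteq> {}" using Minf by auto
      ultimately show ?thesis using card_of_empty3[of M] by blast
    qed
    have "subset_star M (Z \<alpha> H A) C" unfolding subset_star_def eZ by (rule emM)
    then show "\<exists>B\<in>Bs. subset_star M B C" using ZB by blast
  qed
  have card: "|Bs| \<le>o lr"
  proof -
    have LL: "|Field lr| \<le>o lr" using card_of_Field_ordIso[OF lrC] ordIso_iff_ordLeq by blast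
    have "|G| \<le>o |Field lr|"
      by (rule ordLeq_ordIso_trans[OF Gcard ordIso_symmetric[OF card_of_Field_ordIso[OF lrC]]])
    then obtain \<phi> where \<phi>: "inj_on \<phi> G" "\<phi> ` G \<subseteq> Field lr"
      using card_of_ordLeq[of G "Field lr"] by blast
    have "|Fpow G| \<le>o |Fpow (Field lr)|"
      using card_of_ordLeq[of "Fpow G" "Fpow (Field lr)"] inj_on_image_Fpow[OF \<phi>(1)]
        image_Fpow_mono[OF \<phi>(2)] by blast
    then have FG: "|Fpow G| \<le>o lr"
      by (rule ordLeq_transitive[OF _ ordLeq_transitive[OF Fpow_card[OF Linf] LL]])
    have FF: "|Fam| \<le>o lr" using Fcard ordIso_iff_ordLeq by blast
    have P: "|Fpow G \<times> Fam| \<le>o lr"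
      by (rule card_of_Times_ordLeq_infinite_Field[OF Linf FG FF lrC])
    have P2: "|Field lr \<times> (Fpow G \<times> Fam)| \<le>o lr"
      by (rule card_of_Times_ordLeq_infinite_Field[OF Linf LL P lrC])
    have "|Bs| \<le>o |(\<lambda>(\<alpha>,H,A). Z \<alpha> H A) ` (Field lr \<times> Fpow G \<times> Fam)|"
      unfolding Bs_def by (rule card_of_mono1) blast
    then show ?thesis by (rule ordLeq_transitive[OF _ ordLeq_transitive[OF card_of_image P2]])
  qed
  have "Ch_le M U lr" unfolding Ch_le_def using base card by blast
  then show ?thesis using Uult Uunif by blast
qed

end
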